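(* Let $r\ge2$, $t\ge1$, $0<\mu<1/(3r^2)^{12}$, $0<\eta<\mu^2/3$, and let $n$ be sufficiently large. Fix an $r$-partition $Q=(V_1,\dots,V_r)$ of $[n]$ and two distinct vertices $x,y\in V_1$. Then there is a set $\mathcal P$ of $r$-partitions of $[n]\setminus\{x,y\}$ with $|\mathcal P|\le e^{\mu^{2/3}n}$ such that for every $G\in F_Q^*(n,T_{r+1}^t,\eta,\mu)$, every optimal $r$-partition of $G-\{x,y\}$ belongs to $\mathcal P$.
   Context: A digraph has no loops and at most one arc in each direction between two vertices. $T_{r+1}^t$ is the blow-up of the transitive tournament $T_{r+1}$ in which each vertex is replaced by an independent set of size $t$ and each arc $ij$ by all arcs from the $i$-th set to the $j$-th set. For an $r$-partition $Q$ of a vertex set and a digraph $G$ on it, an arc is non-crossing if both endpoints lie in the same part; $Q$ is optimal for $G$ if it minimises the number of non-crossing arcs among all $r$-partitions of that vertex set. $\overrightarrow{e}(U,W)$ is the number of arcs from $U$ to $W$. $F_Q^*(n,T_{r+1}^t,\eta,\mu)$ is the set of labelled $T_{r+1}^t$-free digraphs $G$ on $[n]$ such that $Q=(V_1,\dots,V_r)$ is optimal for $G$, $G$ has at most $\eta n^2$ non-crossing arcs with respect to $Q$, (F2) for all distinct $i,j\in[r]$ and all $U_i\subseteq V_i$, $U_j\subseteq V_j$ with $|U_i|,|U_j|\ge\mu n$ we have $\overrightarrow{e}(U_i,U_j),\overrightarrow{e}(U_j,U_i)\ge\frac16|U_i||U_j|$, and (F3) $||V_i|-n/r|\le\mu n$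 for all $i$. *)

theory Defs
  imports Complex_Main "HOL-Library.FuncSet"
begin

text \<open>A digraph on vertex set V: a set of arcs (ordered pairs), no loops.
  At most one arc in each direction is automatic for a set of pairs.\<close>
definition digraph_on :: "nat set \<Rightarrow> (nat \<times> nat) set \<Rightarrow> bool" where
  "digraph_on V G \<longleftrightarrow> G \<subseteq> V \<times> V \<and> (\<forall>v. (v, v) \<notin> G)"

text \<open>An r-partition (V_1,...,V_r) of V, encoded as the part-index map
  f : V -> {0..<r}; part i+1 is {v in V. f v = i}. Parts may be empty.\<close>
definition rpart :: "nat \<Rightarrow> nat set \<Rightarrow> (nat \<Rightarrow> nat) \<Rightarrow> bool" where
  "rpart r V f \<longleftrightarrow> f \<in> V \<rightarrow>\<^sub>E {..<r}"

definition part :: "nat set \<Rightarrow> (nat \<Rightarrow> nat) \<Rightarrow> nat \<Rightarrow> nat set" where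
  "part V f i = {v \<in> V. f v = i}"

definition noncross :: "(nat \<times> nat) set \<Rightarrow> (nat \<Rightarrow> nat) \<Rightarrow> nat" where
  "noncross G f = card {(u, v) \<in> G. f u = f v}"

definition optimal :: "nat \<Rightarrow> nat set \<Rightarrow> (nat \<times> nat) set \<Rightarrow> (nat \<Rightarrow> nat) \<Rightarrow> bool" where
  "optimal r V G f \<longleftrightarrow> rpart r V f \<and> (\<forall>g. rpart r V g \<longrightarrow> noncross G f \<le> noncross G g)"

definition arcs :: "(nat \<times> nat) set \<Rightarrow> nat set \<Rightarrow> nat set \<Rightarrow> nat" where
  "arcs G U W = card (G \<inter> (U \<times> W))"

text \<open>G contains the blow-up T_{r+1}^t of the transitive tournament T_{r+1}:
  vertices (i,a), i \<le> r, a < t; arcs (i,a) -> (j,b) whenever i < j.\<close>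
definition contains_blowup :: "nat \<Rightarrow> nat \<Rightarrow> (nat \<times> nat) set \<Rightarrow> bool" where
  "contains_blowup r t G \<longleftrightarrow>
     (\<exists>\<phi> :: nat \<times> nat \<Rightarrow> nat. inj_on \<phi> ({..r} \<times> {..<t}) \<and>
        (\<forall>i j a b. i < j \<and> j \<le> r \<and> a < t \<and> b < t \<longrightarrow> (\<phi> (i, a), \<phi> (j, b)) \<in> G))"

definition FQstar :: "nat \<Rightarrow> nat \<Rightarrow> nat \<Rightarrow> real \<Rightarrow> real \<Rightarrow> (nat \<Rightarrow> nat) \<Rightarrow> (nat \<times> nat) set set" where
  "FQstar n r t \<eta> \<mu> Q = {G.
     digraph_on {1..n} G \<and> \<not> contains_blowup r t G \<and>
     optimal r {1..n} G Q \<and>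
     real (noncross G Q) \<le> \<eta> * real n ^ 2 \<and>
     (\<forall>i j Ui Uj. i < r \<and> j < r \<and> i \<noteq> j \<and> Ui \<subseteq> part {1..n} Q i \<and> Uj \<subseteq> part {1..n} Q j \<and>
        real (card Ui) \<ge> \<mu> * real n \<and> real (card Uj) \<ge> \<mu> * real n \<longrightarrow>
        real (arcs G Ui Uj) \<ge> real (card Ui) * real (card Uj) / 6 \<and>
        real (arcs G Uj Ui) \<ge> real (card Ui) * real (card Uj) / 6) \<and>
     (\<forall>i < r. \<bar>real (card (part {1..n} Q i)) - real n / real r\<bar> \<le> \<mu> * real n)}"

end

theory Submission
  imports Defs
begin

lemma sum_Pow_card:
  assumes "finite A"
  shows "(\<Sum>S\<in>Pow A. (c::real) ^ card S) = (1 + c) ^ card A"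
proof -
  have "(\<Prod>x\<in>A. c + 1) = (\<Sum>S\<in>Pow A. prod (\<lambda>_. c) S * prod (\<lambda>_. 1) (A - S))"
    by (rule prod_add[OF assms])
  also have "\<dots> = (\<Sum>S\<in>Pow A. c ^ card S)" by simp
  finally show ?thesis by (simp add: add.commute)
qed

lemma count_lemma:
  fixes V :: "nat set" and Q :: "nat \<Rightarrow> nat" and r :: nat and m p :: real
  assumes finV: "finite V" and p0: "0 < p" and p1: "p \<le> 1"
  shows "real (card {f. rpart r V f \<and> (\<exists>\<sigma>\<in>{..<r}\<rightarrow>\<^sub>E{..<r}. real (card {v\<in>V. f v \<noteq> \<sigma> (Q v)}) \<le> m)})
     \<le> real r ^ r * (p powr (-m)) * (1 + real r * p) ^ card V"
proof -
  define P where "P = {f. rpart r V f \<and> (\<exists>\<sigma>\<in>{..<r}\<rightarrow>\<^sub>E{..<r}. real (card {v\<in>V. f v \<noteq> \<sigma> (Q v)}) \<le> m)}"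
  define SS where "SS = {S. S \<subseteq> V \<and> real (card S) \<le> m}"
  define D where "D = Sigma ({..<r}\<rightarrow>\<^sub>E{..<r}) (\<lambda>\<sigma>. Sigma SS (\<lambda>S. S \<rightarrow>\<^sub>E {..<r}))"
  define F where "F = (\<lambda>(\<sigma>::nat\<Rightarrow>nat,S::nat set,g::nat\<Rightarrow>nat). \<lambda>v. if v\<in>V then (if v\<in>S then g v else \<sigma> (Q v)) else undefined)"
  have finSS: "finite SS" unfolding SS_def using finV by auto
  have finS: "finite S" if "S \<in> SS" for S using that finV unfolding SS_def by (auto intro: finite_subset)
  have finD: "finite D" unfolding D_def using finSS finS
    by (auto intro!: finite_SigmaI finite_PiE)
  have "P \<subseteq> F ` D"
  proof
    fix f assume "f \<in> P"
    then obtain \<sigma> where f: "f \<in> V \<rightarrow>\<^sub>E {..<r}" and \<sigma>: "\<sigma> \<in> {..<r}\<rightarrow>\<^sub>E{..<r}"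
      and c: "real (card {v\<in>V. f v \<noteq> \<sigma> (Q v)}) \<le> m"
      unfolding P_def rpart_def by blast
    define S where "S = {v\<in>V. f v \<noteq> \<sigma> (Q v)}"
    have "(\<sigma>, S, restrict f S) \<in> D" unfolding D_def SS_def S_def using f \<sigma> c by auto
    moreover have "f = F (\<sigma>, S, restrict f S)"
    proof
      fix v show "f v = F (\<sigma>, S, restrict f S) v"
        using f unfolding F_def S_def by (auto simp: PiE_def extensional_def)
    qed
    ultimately show "f \<in> F ` D" by blast
  qed
  then have "card P \<le> card (F ` D)" using finD by (intro card_mono) auto
  also have "\<dots> \<le> card D" using finD by (rule card_image_le)
  also have "card D = (\<Sum>\<sigma>\<in>{..<r}\<rightarrow>\<^sub>E{..<r}. \<Sum>S\<in>SS. r ^ card S)"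
    unfolding D_def using finSS finS
    by (simp add: card_SigmaI finite_PiE card_funcsetE finite_SigmaI)
  also have "\<dots> = r ^ r * (\<Sum>S\<in>SS. r ^ card S)"
    by (simp add: card_funcsetE)
  finally have "card P \<le> r ^ r * (\<Sum>S\<in>SS. r ^ card S)" .
  then have "real (card P) \<le> real (r ^ r * (\<Sum>S\<in>SS. r ^ card S))" by (simp only: of_nat_le_iff)
  then have cP: "real (card P) \<le> real r ^ r * (\<Sum>S\<in>SS. real r ^ card S)"
    by (simp add: of_nat_sum)
  have "(\<Sum>S\<in>SS. real r ^ card S) \<le> (\<Sum>S\<in>SS. real r ^ card S * (p ^ card S / p powr m))"
  proof (rule sum_mono)
    fix S assume "S \<in> SS"
    then have "real (card S) \<le> m" unfolding SS_def by auto
    then have "p powr m \<le> p powr (real (card S))" using p0 p1 by (intro powr_mono') auto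
    also have "\<dots> = p ^ card S" using p0 by (simp add: powr_realpow)
    finally have "1 \<le> p ^ card S / p powr m" using p0 by simp
    then show "real r ^ card S \<le> real r ^ card S * (p ^ card S / p powr m)"
      using mult_left_mono[of 1 "p ^ card S / p powr m" "real r ^ card S"] by simp
  qed
  also have "\<dots> \<le> (\<Sum>S\<in>Pow V. real r ^ card S * (p ^ card S / p powr m))"
    using finV p0 by (intro sum_mono2) (auto simp: SS_def)
  also have "\<dots> = (\<Sum>S\<in>Pow V. (real r * p) ^ card S) * p powr (-m)"
    by (simp add: sum_distrib_right power_mult_distrib powr_minus divide_inverse mult.assoc)
  also have "\<dots> = (1 + real r * p) ^ card V * p powr (-m)"
    using finV by (simp add: sum_Pow_card)
  finally have "(\<Sum>S\<in>SS. real r ^ card S) \<le> (1 + real r * p) ^ card V * p powr (-m)" .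
  with cP have "real (card P) \<le> real r ^ r * ((1 + real r * p) ^ card V * p powr (-m))"
    by (meson mult_left_mono order_trans zero_le_power of_nat_0_le_iff)
  then show ?thesis unfolding P_def by (simp add: mult_ac)
qed

lemma close_part:
  fixes n r t :: nat and \<mu> \<eta> :: real and Q f :: "nat \<Rightarrow> nat" and x y :: nat
  assumes G: "G \<in> FQstar n r t \<eta> \<mu> Q"
    and V'def: "V' = {1..n} - {x, y}"
    and opt: "optimal r V' (G \<inter> (V' \<times> V')) f"
    and mu0: "0 < \<mu>" and mur: "\<mu> * (1 + real r) \<le> 1 / (2 * real r)"
    and r2: "r \<ge> 1" and n4: "real n \<ge> 4 * real r"
    and eta: "\<eta> < \<mu> ^ 2 / 3"
  shows "\<exists>\<sigma>\<in>{..<r}\<rightarrow>\<^sub>E{..<r}. real (card {v\<in>V'. f v \<noteq> \<sigma> (Q v)}) \<le> real r ^ 2 * \<mu> * real n"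
proof -
  define G' where "G' = G \<inter> (V' \<times> V')"
  have dg: "digraph_on {1..n} G" and optQ: "optimal r {1..n} G Q"
    and ncQ: "real (noncross G Q) \<le> \<eta> * real n ^ 2"
    and F2: "\<And>i j Ui Uj. i < r \<Longrightarrow> j < r \<Longrightarrow> i \<noteq> j \<Longrightarrow> Ui \<subseteq> part {1..n} Q i \<Longrightarrow> Uj \<subseteq> part {1..n} Q j \<Longrightarrow>
        real (card Ui) \<ge> \<mu> * real n \<Longrightarrow> real (card Uj) \<ge> \<mu> * real n \<Longrightarrow>
        real (arcs G Ui Uj) \<ge> real (card Ui) * real (card Uj) / 6 \<and>
        real (arcs G Uj Ui) \<ge> real (card Ui) * real (card Uj) / 6"
    and F3: "\<And>i. i < r \<Longrightarrow> \<bar>real (card (part {1..n} Q i)) - real n / real r\<bar> \<le> \<mu> * real n"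
    using G unfolding FQstar_def by blast+
  have finG: "finite G" using dg unfolding digraph_on_def by (auto intro: finite_subset)
  have finGs: "finite {(u, v). (u, v) \<in> G \<and> P u v}" for P by (rule finite_subset[OF _ finG]) auto
  have Qf: "Q \<in> {1..n} \<rightarrow>\<^sub>E {..<r}" using optQ unfolding optimal_def rpart_def by blast
  have ff: "f \<in> V' \<rightarrow>\<^sub>E {..<r}" using opt unfolding optimal_def rpart_def by blast
  have V'sub: "V' \<subseteq> {1..n}" using V'def by auto
  have finV': "finite V'" using V'def by auto
  have rQ: "rpart r V' (restrict Q V')" using Qf V'sub unfolding rpart_def by (auto simp: PiE_def Pi_def)
  have "noncross G' f \<le> noncross G' (restrict Q V')"
    using opt rQ unfolding optimal_def G'_def by blast
  also have "\<dots> \<le> noncross G Q" unfolding noncross_def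
    by (rule card_mono) (use finGs in \<open>auto simp: G'_def\<close>)
  finally have nc: "real (noncross G' f) \<le> \<eta> * real n ^ 2" using ncQ by linarith
  define A where "A i j = {v\<in>V'. Q v = i \<and> f v = j}" for i j
  have finA: "finite (A i j)" for i j using finV' unfolding A_def by auto
  have Apart: "A i j \<subseteq> part {1..n} Q i" for i j using V'sub unfolding A_def part_def by auto
  have npos: "real n > 0" using n4 r2 by simp
  have claim2: "\<not> (\<mu> * real n \<le> real (card (A i j)) \<and> \<mu> * real n \<le> real (card (A i' j)))"
    if "i < r" "i' < r" "i \<noteq> i'" for i i' j
  proof
    assume big: "\<mu> * real n \<le> real (card (A i j)) \<and> \<mu> * real n \<le> real (card (A i' j))"
    define a where "a = real (card (A i j))"
    define b where "b = real (card (A i' j))"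
    have ar: "real (arcs G (A i j) (A i' j)) \<ge> a * b / 6 \<and> real (arcs G (A i' j) (A i j)) \<ge> a * b / 6"
      using F2[OF that(1,2,3) Apart Apart] big unfolding a_def b_def by blast
    have disj: "(G \<inter> (A i j \<times> A i' j)) \<inter> (G \<inter> (A i' j \<times> A i j)) = {}"
      using that(3) unfolding A_def by auto
    have sub: "(G \<inter> (A i j \<times> A i' j)) \<union> (G \<inter> (A i' j \<times> A i j)) \<subseteq> {(u, v) \<in> G'. f u = f v}"
      unfolding A_def G'_def by auto
    have "arcs G (A i j) (A i' j) + arcs G (A i' j) (A i j)
        = card ((G \<inter> (A i j \<times> A i' j)) \<union> (G \<inter> (A i' j \<times> A i j)))"
      unfolding arcs_def using disj finG by (simp add: card_Un_disjoint)
    also have "\<dots> \<le> noncross G' f" unfolding noncross_def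
    proof (rule card_mono)
      show "finite {(u, v). (u, v) \<in> G' \<and> f u = f v}"
        by (rule finite_subset[OF _ finG]) (auto simp: G'_def)
    qed (use sub in blast)
    finally have "real (arcs G (A i j) (A i' j)) + real (arcs G (A i' j) (A i j)) \<le> real (noncross G' f)"
      by (metis of_nat_add of_nat_le_iff)
    with ar nc have "a * b / 3 \<le> \<eta> * real n ^ 2" by linarith
    moreover have "(\<mu> * real n) * (\<mu> * real n) \<le> a * b"
      using big mu0 npos unfolding a_def b_def by (intro mult_mono) auto
    moreover have "\<eta> * real n ^ 2 < \<mu> ^ 2 / 3 * real n ^ 2" using eta npos by simp
    ultimately show False by (simp add: power2_eq_square algebra_simps)
  qed
  have claim3: "\<exists>j<r. \<mu> * real n \<le> real (card (A i j))" if ir: "i < r" for i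
  proof (rule ccontr)
    assume "\<not> ?thesis"
    then have small: "\<And>j. j < r \<Longrightarrow> real (card (A i j)) < \<mu> * real n" by force
    have "{v\<in>V'. Q v = i} = (\<Union>j\<in>{..<r}. A i j)" using ff unfolding A_def by (auto simp: PiE_def Pi_def)
    then have "card {v\<in>V'. Q v = i} \<le> (\<Sum>j<r. card (A i j))" by (simp add: card_UN_le)
    then have "real (card {v\<in>V'. Q v = i}) \<le> (\<Sum>j<r. real (card (A i j)))"
      by (metis of_nat_le_iff of_nat_sum)
    also have "\<dots> < (\<Sum>j<r. \<mu> * real n)" using r2 small by (intro sum_strict_mono) (auto simp: lessThan_empty_iff)
    finally have lt: "real (card {v\<in>V'. Q v = i}) < real r * (\<mu> * real n)" by simp
    have "part {1..n} Q i \<subseteq> {v\<in>V'. Q v = i} \<union> {x, y}" unfolding part_def V'def by auto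
    then have "card (part {1..n} Q i) \<le> card ({v\<in>V'. Q v = i} \<union> {x, y})"
      by (intro card_mono) (use finV' in auto)
    also have "\<dots> \<le> card {v\<in>V'. Q v = i} + card {x, y}" by (rule card_Un_le)
    also have "card {x, y} \<le> 2" by (simp add: card_insert_if)
    finally have "real (card (part {1..n} Q i)) \<le> real (card {v\<in>V'. Q v = i}) + 2" by linarith
    moreover have "real n / real r - \<mu> * real n \<le> real (card (part {1..n} Q i))" using F3[OF ir] by linarith
    ultimately have "real n / real r - \<mu> * real n * (1 + real r) < 2" using lt by (simp add: algebra_simps)
    moreover have "\<mu> * real n * (1 + real r) \<le> real n / (2 * real r)"
      using mult_right_mono[OF mur, of "real n"] by (simp add: algebra_simps)
    moreover have "real n / (2 * real r) \<ge> 2" using n4 r2 by (simp add: field_simps)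
    moreover have "real n / real r = real n / (2 * real r) + real n / (2 * real r)" by (simp add: field_simps)
    ultimately show False by linarith
  qed
  obtain \<sigma>0 where s0: "\<And>i. i < r \<Longrightarrow> \<sigma>0 i < r \<and> \<mu> * real n \<le> real (card (A i (\<sigma>0 i)))"
    using claim3 by metis
  define \<sigma> where "\<sigma> = restrict \<sigma>0 {..<r}"
  have \<sigma>E: "\<sigma> \<in> {..<r}\<rightarrow>\<^sub>E{..<r}" unfolding \<sigma>_def using s0 by auto
  have inj: "inj_on \<sigma> {..<r}"
  proof (rule inj_onI)
    fix i i' assume "i \<in> {..<r}" "i' \<in> {..<r}" "\<sigma> i = \<sigma> i'"
    then show "i = i'" using claim2[of i i' "\<sigma>0 i"] s0[of i] s0[of i'] unfolding \<sigma>_def by auto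
  qed
  have surj: "\<sigma> ` {..<r} = {..<r}" using \<sigma>E inj by (intro endo_inj_surj) auto
  define Sm where "Sm = {q \<in> {..<r} \<times> {..<r}. real (card (A (fst q) (snd q))) < \<mu> * real n}"
  have finSm: "finite Sm" unfolding Sm_def by auto
  have mis: "{v\<in>V'. f v \<noteq> \<sigma> (Q v)} \<subseteq> (\<Union>q\<in>Sm. A (fst q) (snd q))"
  proof
    fix v assume v: "v \<in> {v\<in>V'. f v \<noteq> \<sigma> (Q v)}"
    define i where "i = Q v"
    define j where "j = f v"
    have ir: "i < r" using v Qf V'sub unfolding i_def by auto
    have jr: "j < r" using v ff unfolding j_def by auto
    then obtain i' where i': "i' < r" "j = \<sigma> i'" using surj by (metis imageE lessThan_iff)
    have "i' \<noteq> i" using v i' unfolding i_def j_def by auto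
    moreover have "\<mu> * real n \<le> real (card (A i' j))" using s0[OF i'(1)] i' unfolding \<sigma>_def by auto
    ultimately have "real (card (A i j)) < \<mu> * real n" using claim2[OF ir i'(1), of j] by linarith
    then have "(i, j) \<in> Sm" unfolding Sm_def using ir jr by auto
    moreover have "v \<in> A i j" using v unfolding A_def i_def j_def by auto
    ultimately show "v \<in> (\<Union>q\<in>Sm. A (fst q) (snd q))" by force
  qed
  have "card {v\<in>V'. f v \<noteq> \<sigma> (Q v)} \<le> card (\<Union>q\<in>Sm. A (fst q) (snd q))"
    using mis finSm finA by (intro card_mono) auto
  also have "\<dots> \<le> (\<Sum>q\<in>Sm. card (A (fst q) (snd q)))" by (rule card_UN_le[OF finSm])
  finally have "real (card {v\<in>V'. f v \<noteq> \<sigma> (Q v)}) \<le> (\<Sum>q\<in>Sm. real (card (A (fst q) (snd q))))"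
    by (metis of_nat_le_iff of_nat_sum)
  also have "\<dots> \<le> (\<Sum>q\<in>Sm. \<mu> * real n)" by (intro sum_mono) (auto simp: Sm_def)
  also have "\<dots> = real (card Sm) * (\<mu> * real n)" by simp
  also have "\<dots> \<le> real (r ^ 2) * (\<mu> * real n)"
  proof (rule mult_right_mono)
    have "card Sm \<le> card ({..<r} \<times> {..<r})" unfolding Sm_def by (intro card_mono) auto
    then have "card Sm \<le> r ^ 2" by (simp add: power2_eq_square)
    then show "real (card Sm) \<le> real (r ^ 2)" by (simp only: of_nat_le_iff)
  qed (use mu0 in auto)
  finally show ?thesis using \<sigma>E by (auto simp: algebra_simps)
qed

lemma const_pos:
  fixes r :: nat and \<mu> :: real
  assumes r2: "r \<ge> 2" and mu0: "0 < \<mu>" and mu1: "\<mu> < 1 / (3 * real r ^ 2) ^ 12"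
  shows "real r ^ 2 * \<mu> * (1 - ln (real r * \<mu>)) < \<mu> powr (2/3)"
proof -
  define w where "w = \<mu> powr (1/6)"
  have w0: "w > 0" unfolding w_def using mu0 by simp
  have w6: "w ^ 6 = \<mu>" unfolding w_def using mu0
    by (simp add: powr_realpow[symmetric] powr_powr)
  have w4: "\<mu> powr (2/3) = w ^ 4" unfolding w_def using mu0
    by (simp add: powr_realpow[symmetric] powr_powr)
  have r1: "real r \<ge> 2" using r2 by simp
  have "(7 * real r ^ 2) ^ 6 \<le> (3 * real r ^ 2) ^ 12"
  proof -
    have rr: "real r ^ 2 \<ge> 1" using r1 by (simp add: one_le_power)
    have e: "(3 * real r ^ 2) ^ 2 = 9 * real r ^ 2 * real r ^ 2" by (simp add: power2_eq_square)
    have "9 * real r ^ 2 * 1 \<le> 9 * real r ^ 2 * real r ^ 2" using rr by (intro mult_left_mono) auto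
    then have "7 * real r ^ 2 \<le> (3 * real r ^ 2) ^ 2" using e rr by linarith
    then have "(7 * real r ^ 2) ^ 6 \<le> ((3 * real r ^ 2) ^ 2) ^ 6" by (intro power_mono) auto
    then show ?thesis by (simp add: power_mult[symmetric])
  qed
  then have "1 / (3 * real r ^ 2) ^ 12 \<le> 1 / (7 * real r ^ 2) ^ 6"
    using r1 by (intro divide_left_mono) auto
  also have "\<dots> = (1 / (7 * real r ^ 2)) ^ 6" by (rule power_one_over[symmetric])
  finally have "w ^ 6 < (1 / (7 * real r ^ 2)) ^ 6" using mu1 w6 by linarith
  then have wsm: "w < 1 / (7 * real r ^ 2)"
    using power_less_imp_less_base[of w 6 "1 / (7 * real r ^ 2)"] by simp
  then have w1: "w \<le> 1" using r1 by (smt (verit) divide_le_eq_1 one_le_power)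
  have "ln (real r * \<mu>) = ln (real r) + 6 * ln w"
  proof -
    have "ln \<mu> = 6 * ln w" using w6 w0 ln_realpow[of w 6] by simp
    then show ?thesis using r1 mu0 by (simp add: ln_mult)
  qed
  moreover have "ln (real r) \<ge> 0" using r1 by simp
  moreover have "- ln w \<le> 1 / w"
  proof -
    have "ln (1 / w) \<le> 1 / w - 1" using w0 by (intro ln_le_minus_one) auto
    then show ?thesis using w0 by (simp add: ln_div)
  qed
  ultimately have L: "1 - ln (real r * \<mu>) \<le> 1 + 6 / w" by simp
  have "real r ^ 2 * \<mu> * (1 - ln (real r * \<mu>)) \<le> real r ^ 2 * \<mu> * (1 + 6 / w)"
    using L mu0 by (intro mult_left_mono) auto
  also have "\<dots> = real r ^ 2 * (w ^ 6 + 6 * w ^ 5)" using w0 w6[symmetric]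
    by (simp add: field_simps eval_nat_numeral)
  also have "\<dots> \<le> real r ^ 2 * (7 * w ^ 5)"
  proof -
    have "w ^ 6 \<le> w ^ 5" using w0 w1 by (intro power_decreasing) auto
    then show ?thesis by (intro mult_left_mono) auto
  qed
  also have "\<dots> = (7 * real r ^ 2 * w) * w ^ 4" by (simp add: eval_nat_numeral)
  also have "\<dots> < 1 * w ^ 4"
  proof (rule mult_strict_right_mono)
    show "7 * real r ^ 2 * w < 1" using wsm r1 by (simp add: field_simps)
  qed (use w0 in auto)
  finally show ?thesis using w4 by simp
qed

theorem lemma5p4:
  fixes r t :: nat and \<mu> \<eta> :: real
  assumes "r \<ge> 2" and "t \<ge> 1"
    and "0 < \<mu>" and "\<mu> < 1 / (3 * real r ^ 2) ^ 12"
    and "0 < \<eta>" and "\<eta> < \<mu> ^ 2 / 3"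
  shows "\<exists>n0. \<forall>n \<ge> n0. \<forall>Q x y.
     rpart r {1..n} Q \<and> x \<in> {1..n} \<and> y \<in> {1..n} \<and> x \<noteq> y \<and> Q x = 0 \<and> Q y = 0 \<longrightarrow>
     (\<exists>P. P \<subseteq> {f. rpart r ({1..n} - {x, y}) f} \<and>
          real (card P) \<le> exp (\<mu> powr (2/3) * real n) \<and>
          (\<forall>G \<in> FQstar n r t \<eta> \<mu> Q. \<forall>f.
              optimal r ({1..n} - {x, y}) (G \<inter> (({1..n} - {x, y}) \<times> ({1..n} - {x, y}))) f
              \<longrightarrow> f \<in> P))"
proof -
  note r2 = assms(1) and mu0 = assms(3) and mu1 = assms(4) and eta = assms(6)
  have r1: "real r \<ge> 2" using r2 by simp
  define c where "c = \<mu> powr (2/3) - real r ^ 2 * \<mu> * (1 - ln (real r * \<mu>))"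
  have c0: "c > 0" unfolding c_def using const_pos[OF r2 mu0 mu1] by simp
  have "real r ^ 2 \<ge> 1" using r1 by (simp add: one_le_power)
  then have big: "3 * real r ^ 2 \<le> (3 * real r ^ 2) ^ 12"
    by (intro self_le_power) auto
  have "\<mu> < 1 / (3 * real r ^ 2)"
  proof -
    have "1 / (3 * real r ^ 2) ^ 12 \<le> 1 / (3 * real r ^ 2)" using big r1 by (intro divide_left_mono) auto
    then show ?thesis using mu1 by linarith
  qed
  moreover have "1 / (3 * real r ^ 2) \<le> 1 / (2 * real r * (1 + real r))"
  proof (rule divide_left_mono)
    show "2 * real r * (1 + real r) \<le> 3 * real r ^ 2" using r1 by (simp add: power2_eq_square algebra_simps)
    show "0 < 3 * real r ^ 2 * (2 * real r * (1 + real r))" using r1 by (intro mult_pos_pos) auto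
  qed simp
  ultimately have "\<mu> \<le> 1 / (2 * real r * (1 + real r))" by linarith
  moreover have D: "2 * real r * (1 + real r) > 0" using r1 by simp
  ultimately have "\<mu> * (2 * real r * (1 + real r)) \<le> 1"
    using mult_right_mono[of \<mu> "1 / (2 * real r * (1 + real r))" "2 * real r * (1 + real r)"] r2 by simp
  then have "\<mu> * (1 + real r) * (2 * real r) \<le> 1" by (simp add: mult_ac)
  then have mur: "\<mu> * (1 + real r) \<le> 1 / (2 * real r)"
    using pos_le_divide_eq[of "2 * real r" "\<mu> * (1 + real r)" 1] r1 by simp
  have "real r * \<mu> \<le> \<mu> * (1 + real r)" using mu0 by (simp add: algebra_simps)
  moreover have "1 / (2 * real r) \<le> 1" using r1 by simp
  ultimately have p1: "real r * \<mu> \<le> 1" using mur by linarith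
  define n0 where "n0 = nat \<lceil>max (4 * real r) (real r * ln (real r) / c)\<rceil> + 1"
  show ?thesis
  proof (rule exI[of _ n0], intro allI impI)
    fix n Q x y
    assume nn: "n0 \<le> n"
    assume "rpart r {1..n} Q \<and> x \<in> {1..n} \<and> y \<in> {1..n} \<and> x \<noteq> y \<and> Q x = 0 \<and> Q y = 0"
    have n4: "real n \<ge> 4 * real r" and nc: "real n \<ge> real r * ln (real r) / c"
      using nn unfolding n0_def by linarith+
    define V' where "V' = {1..n} - {x, y}"
    define m where "m = real r ^ 2 * \<mu> * real n"
    define p where "p = real r * \<mu>"
    define P where "P = {f. rpart r V' f \<and> (\<exists>\<sigma>\<in>{..<r}\<rightarrow>\<^sub>E{..<r}. real (card {v\<in>V'. f v \<noteq> \<sigma> (Q v)}) \<le> m)}"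
    have p0: "p > 0" unfolding p_def using r1 mu0 by simp
    have finV': "finite V'" unfolding V'_def by auto
    have cardV: "card V' \<le> n" unfolding V'_def
      by (metis Diff_subset card_atLeastAtMost card_mono diff_Suc_1 finite_atLeastAtMost)
    have "real (card P) \<le> real r ^ r * (p powr (-m)) * (1 + real r * p) ^ card V'"
      unfolding P_def using count_lemma[OF finV' p0 p1[folded p_def]] by simp
    also have "\<dots> \<le> exp (real r * ln (real r)) * exp (- m * ln p) * exp (m)"
    proof (intro mult_mono)
      show "real r ^ r \<le> exp (real r * ln (real r))"
        using r1 exp_of_nat_mult[of r "ln (real r)"] by simp
      show "p powr - m \<le> exp (- m * ln p)" using p0 by (simp add: powr_def)
      have "(1 + real r * p) ^ card V' \<le> exp (real r * p) ^ card V'"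
        using p0 r1 by (intro power_mono) (auto intro: exp_ge_add_one_self)
      also have "\<dots> = exp (real (card V') * (real r * p))" by (simp add: exp_of_nat_mult)
      also have "\<dots> \<le> exp (real n * (real r * p))"
        using cardV p0 r1 by (simp add: mult_right_mono)
      also have "real n * (real r * p) = m" unfolding m_def p_def by (simp add: power2_eq_square)
      finally show "(1 + real r * p) ^ card V' \<le> exp m" .
    qed (use p0 in auto)
    also have "\<dots> = exp (real r * ln (real r) + m * (1 - ln p))"
      by (simp add: exp_add[symmetric] algebra_simps)
    also have "\<dots> \<le> exp (\<mu> powr (2/3) * real n)"
    proof -
      have "real r * ln (real r) \<le> real n * c" using nc c0 by (simp add: field_simps)
      then show ?thesis unfolding c_def m_def p_def by (simp add: algebra_simps)
    qed
    finally have cP: "real (card P) \<le> exp (\<mu> powr (2/3) * real n)" .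
    show "\<exists>P. P \<subseteq> {f. rpart r ({1..n} - {x, y}) f} \<and>
          real (card P) \<le> exp (\<mu> powr (2/3) * real n) \<and>
          (\<forall>G \<in> FQstar n r t \<eta> \<mu> Q. \<forall>f.
              optimal r ({1..n} - {x, y}) (G \<inter> (({1..n} - {x, y}) \<times> ({1..n} - {x, y}))) f
              \<longrightarrow> f \<in> P)"
    proof (intro exI conjI ballI allI impI)
      show "P \<subseteq> {f. rpart r ({1..n} - {x, y}) f}" unfolding P_def V'_def by auto
      show "real (card P) \<le> exp (\<mu> powr (2/3) * real n)" by (rule cP)
      fix G f
      assume G: "G \<in> FQstar n r t \<eta> \<mu> Q"
        and opt: "optimal r ({1..n} - {x, y}) (G \<inter> (({1..n} - {x, y}) \<times> ({1..n} - {x, y}))) f"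
      have "\<exists>\<sigma>\<in>{..<r}\<rightarrow>\<^sub>E{..<r}. real (card {v\<in>V'. f v \<noteq> \<sigma> (Q v)}) \<le> real r ^ 2 * \<mu> * real n"
        by (rule close_part[OF G V'_def opt[folded V'_def] mu0 mur _ n4 eta]) (use r2 in auto)
      moreover have "rpart r V' f" using opt unfolding optimal_def V'_def by blast
      ultimately show "f \<in> P" unfolding P_def m_def by blast
    qed
  qed
qed

end
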